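(* If a set of reals $X$ satisfies $\binom{\Omega}{\mathrm T^*}$, then for every $k\ge1$ the power $X^k$ satisfies $\binom{\Omega}{\mathrm T^*}$.
   Context: A set of reals is an infinite topological space homeomorphic to a subset of $\mathbb R$. A cover of a space $X$ is a family $\mathcal U$ of subsets of $X$ with $\bigcup\mathcal U=X$ such that $X\not\subseteq U$ for all $U\in\mathcal U$; it is an $\omega$-cover if every finite subset of $X$ is contained in some member. For a countable cover $\mathcal U=\{U_n\}_{n\in a}$ ($a\subseteq\mathbb N$, enumeration bijective) define $h_{\mathcal U}:X\to P(\mathbb N)$ by $h_{\mathcal U}(x)=\{n\in a: x\in U_n\}$. For $a,b\subseteq\mathbb N$, $a\subseteq^* b$ means $a\setminus b$ is finite. A family $Y$ of infinite subsets of $\mathbb N$ is linearly refinable if for each $y\in Y$ there is an infinite $\hat y\subseteq y$ such that $\{\hat y: y\in Y\}$ is linearly ordered by $\subseteq^*$. A countable cover $\mathcal U$ of $X$ is a $\tau^*$-cover if $h_{\mathcal U}[X]$ consists of infinite sets and is linearly refinable. $\Omega$ denotes the collection of open $\omega$-covers of the space, and $\mathrm T^*$ the collection of countable open $\tau^*$-covers. A space satisfies $\binom{\mathfrak U}{\mathfrak V}$ if every $\mathcal U\in\mathfrak U$ has a subfamily belonging to $\mathfrak V$. *)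

theory Defs
  imports "HOL-Analysis.Analysis"
begin

definition is_cover :: "'a topology \<Rightarrow> 'a set set \<Rightarrow> bool" where
  "is_cover T \<U> \<longleftrightarrow> \<Union>\<U> = topspace T \<and> (\<forall>U\<in>\<U>. \<not> topspace T \<subseteq> U)"

definition omega_cover :: "'a topology \<Rightarrow> 'a set set \<Rightarrow> bool" where
  "omega_cover T \<U> \<longleftrightarrow> is_cover T \<U> \<and>
     (\<forall>F. finite F \<and> F \<subseteq> topspace T \<longrightarrow> (\<exists>U\<in>\<U>. F \<subseteq> U))"

definition almost_subset :: "nat set \<Rightarrow> nat set \<Rightarrow> bool" where
  "almost_subset a b \<longleftrightarrow> finite (a - b)"

definition linearly_refinable :: "nat set set \<Rightarrow> bool" where
  "linearly_refinable Y \<longleftrightarrow>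
     (\<exists>r. (\<forall>y\<in>Y. r y \<subseteq> y \<and> infinite (r y)) \<and>
          (\<forall>y\<in>Y. \<forall>z\<in>Y. almost_subset (r y) (r z) \<or> almost_subset (r z) (r y)))"

definition hU :: "nat set \<Rightarrow> (nat \<Rightarrow> 'a set) \<Rightarrow> 'a \<Rightarrow> nat set" where
  "hU a e x = {n\<in>a. x \<in> e n}"

definition tau_star_cover :: "'a topology \<Rightarrow> 'a set set \<Rightarrow> bool" where
  "tau_star_cover T \<U> \<longleftrightarrow> countable \<U> \<and> is_cover T \<U> \<and>
     (\<exists>(a::nat set) e. bij_betw e a \<U> \<and>
        (\<forall>x\<in>topspace T. infinite (hU a e x)) \<and>
        linearly_refinable (hU a e ` topspace T))"

definition Omega_covers :: "'a topology \<Rightarrow> 'a set set set" where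
  "Omega_covers T = {\<U>. (\<forall>U\<in>\<U>. openin T U) \<and> omega_cover T \<U>}"

definition Tstar_covers :: "'a topology \<Rightarrow> 'a set set set" where
  "Tstar_covers T = {\<U>. countable \<U> \<and> (\<forall>U\<in>\<U>. openin T U) \<and> tau_star_cover T \<U>}"

definition select_binom :: "'a topology \<Rightarrow> ('a topology \<Rightarrow> 'a set set set)
     \<Rightarrow> ('a topology \<Rightarrow> 'a set set set) \<Rightarrow> bool" where
  "select_binom T UU VV \<longleftrightarrow> (\<forall>\<U>\<in>UU T. \<exists>\<V>. \<V> \<subseteq> \<U> \<and> \<V> \<in> VV T)"

end

theory Submission imports Defs begin

lemma chain_min_aux:
  assumes "finite F" "F \<noteq> {}" "\<forall>y\<in>F. \<forall>z\<in>F. almost_subset y z \<or> almost_subset z y"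
  shows "\<exists>m\<in>F. \<forall>f\<in>F. finite (m - f)"
  using assms
proof (induction F rule: finite_ne_induct)
  case (singleton x) then show ?case by auto
next
  case (insert x F)
  then obtain m where m: "m \<in> F" "\<forall>f\<in>F. finite (m - f)" by auto
  show ?case
  proof (cases "finite (m - x)")
    case True then show ?thesis using m by auto
  next
    case False
    then have "finite (x - m)" using insert.prems m(1) unfolding almost_subset_def by auto
    have "\<forall>f\<in>F. finite (x - f)"
    proof
      fix f assume "f \<in> F"
      have "x - f \<subseteq> (x - m) \<union> (m - f)" by auto
      then show "finite (x - f)" using \<open>finite (x - m)\<close> m(2) \<open>f \<in> F\<close> finite_subset by blast
    qed
    then show ?thesis by auto
  qed
qed

lemma chain_min:
  assumes "finite F" "F \<noteq> {}" "\<forall>y\<in>F. \<forall>z\<in>F. almost_subset y z \<or> almost_subset z y"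
  shows "\<exists>m\<in>F. finite (m - \<Inter>F)"
proof -
  obtain m where m: "m \<in> F" "\<forall>f\<in>F. finite (m - f)" using chain_min_aux[OF assms] by auto
  have eq: "m - \<Inter>F = (\<Union>f\<in>F. m - f)" by auto
  have "finite (m - \<Inter>F)" unfolding eq by (rule finite_UN_I[OF assms(1)]) (use m in auto)
  then show ?thesis using m(1) by auto
qed

lemma tube:
  assumes "finite I" "finite F" "F \<subseteq> topspace T"
    and "openin (product_topology (\<lambda>_. T) I) U" "PiE I (\<lambda>_. F) \<subseteq> U"
  shows "\<exists>V. openin T V \<and> F \<subseteq> V \<and> PiE I (\<lambda>_. V) \<subseteq> U"
proof -
  define P where "P = PiE I (\<lambda>_. F)"
  have "\<forall>t\<in>P. \<exists>B. (\<forall>i\<in>I. openin T (B i)) \<and> t \<in> PiE I B \<and> PiE I B \<subseteq> U"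
    using assms(4,5) unfolding P_def openin_product_topology_alt by (meson subsetD)
  then obtain B where B: "\<And>t. t \<in> P \<Longrightarrow> (\<forall>i\<in>I. openin T (B t i)) \<and> t \<in> PiE I (B t) \<and> PiE I (B t) \<subseteq> U"
    by metis
  have finP: "finite P" unfolding P_def using assms(1,2) by (simp add: finite_PiE)
  define J where "J z = {p. p \<in> P \<times> I \<and> fst p (snd p) = z}" for z
  define Ob where "Ob z = (\<Inter>p\<in>J z. B (fst p) (snd p)) \<inter> topspace T" for z
  define V where "V = \<Union>(Ob ` F)"
  have openO: "openin T (Ob z)" for z
    unfolding Ob_def
  proof (rule openin_INT)
    show "finite (J z)" unfolding J_def using finP assms(1)
      by (rule_tac finite_subset[of _ "P \<times> I"]) auto
    show "\<And>p. p \<in> J z \<Longrightarrow> openin T (B (fst p) (snd p))" unfolding J_def using B by auto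
  qed
  have "openin T V" unfolding V_def using openO by auto
  moreover have "F \<subseteq> V"
  proof
    fix z assume z: "z \<in> F"
    have "z \<in> Ob z" unfolding Ob_def J_def using z assms(3) B by (auto simp: PiE_iff)
    then show "z \<in> V" using z unfolding V_def by auto
  qed
  moreover have "PiE I (\<lambda>_. V) \<subseteq> U"
  proof
    fix s assume s: "s \<in> PiE I (\<lambda>_. V)"
    have "\<forall>i\<in>I. \<exists>z. z \<in> F \<and> s i \<in> Ob z" using s unfolding V_def by (auto simp: PiE_iff)
    then obtain zf where zf: "\<And>i. i \<in> I \<Longrightarrow> zf i \<in> F \<and> s i \<in> Ob (zf i)" by metis
    define t where "t = restrict zf I"
    have tP: "t \<in> P" unfolding P_def t_def using zf by auto
    have "s \<in> PiE I (B t)"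
    proof -
      have "\<And>i. i \<in> I \<Longrightarrow> s i \<in> B t i"
      proof -
        fix i assume i: "i \<in> I"
        have "(t, i) \<in> J (zf i)" unfolding J_def using tP i by (simp add: t_def)
        then show "s i \<in> B t i" using zf[OF i] unfolding Ob_def by auto
      qed
      then show ?thesis using s by (auto simp: PiE_iff)
    qed
    then show "s \<in> U" using B[OF tP] by auto
  qed
  ultimately show ?thesis by auto
qed

theorem theorem8p2:
  fixes X :: "real set" and k :: nat
  assumes "infinite X"
    and "select_binom (top_of_set X) Omega_covers Tstar_covers"
    and "k \<ge> 1"
  shows "select_binom (product_topology (\<lambda>_. top_of_set X) {..<k}) Omega_covers Tstar_covers"
  unfolding select_binom_def
proof
  define TX where "TX = top_of_set X"
  define P where "P = product_topology (\<lambda>_. TX) {..<k}"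
  define Xk where "Xk = PiE {..<k} (\<lambda>_. X)"
  have topX: "topspace TX = X" unfolding TX_def by simp
  have topP: "topspace P = Xk" unfolding P_def Xk_def by (simp add: topX)
  fix \<U> assume "\<U> \<in> Omega_covers (product_topology (\<lambda>_. top_of_set X) {..<k})"
  then have Uopen: "\<And>U. U \<in> \<U> \<Longrightarrow> openin P U" and Uom: "omega_cover P \<U>"
    unfolding Omega_covers_def P_def TX_def by auto
  have Unot: "\<And>U. U \<in> \<U> \<Longrightarrow> \<not> Xk \<subseteq> U"
    using Uom unfolding omega_cover_def is_cover_def topP by auto
  have Ufin: "\<And>F. finite F \<Longrightarrow> F \<subseteq> Xk \<Longrightarrow> \<exists>U\<in>\<U>. F \<subseteq> U"
    using Uom unfolding omega_cover_def topP by auto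
  define W where "W = {V. openin TX V \<and> (\<exists>U\<in>\<U>. PiE {..<k} (\<lambda>_. V) \<subseteq> U)}"
  have Wsub: "\<And>V. V \<in> W \<Longrightarrow> V \<subseteq> X"
    unfolding W_def using openin_subset topX by blast
  have Wfin: "\<exists>V\<in>W. G \<subseteq> V" if G: "finite G" "G \<subseteq> X" for G
  proof -
    have "finite (PiE {..<k} (\<lambda>_. G))" using G by (simp add: finite_PiE)
    moreover have "PiE {..<k} (\<lambda>_. G) \<subseteq> Xk" unfolding Xk_def using G by (auto simp: PiE_iff)
    ultimately obtain U where U: "U \<in> \<U>" "PiE {..<k} (\<lambda>_. G) \<subseteq> U" using Ufin by blast
    obtain V where V: "openin TX V" "G \<subseteq> V" "PiE {..<k} (\<lambda>_. V) \<subseteq> U"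
      using tube[of "{..<k}" G TX U] G U Uopen[OF U(1)] unfolding P_def topX by auto
    then show ?thesis using U unfolding W_def by auto
  qed
  have "W \<in> Omega_covers TX"
    unfolding Omega_covers_def omega_cover_def is_cover_def topX
  proof (intro CollectI conjI ballI allI impI)
    show "\<And>V. V \<in> W \<Longrightarrow> openin TX V" unfolding W_def by auto
    show "\<Union>W = X"
    proof
      show "\<Union>W \<subseteq> X" using Wsub by auto
      show "X \<subseteq> \<Union>W" using Wfin[of "{_}"] by blast
    qed
    show "\<not> X \<subseteq> V" if "V \<in> W" for V
    proof
      assume "X \<subseteq> V"
      obtain U where "U \<in> \<U>" "PiE {..<k} (\<lambda>_. V) \<subseteq> U" using \<open>V \<in> W\<close> unfolding W_def by auto
      moreover have "Xk \<subseteq> PiE {..<k} (\<lambda>_. V)" unfolding Xk_def using \<open>X \<subseteq> V\<close> by (auto simp: PiE_iff)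
      ultimately show False using Unot by blast
    qed
    show "\<And>F. finite F \<and> F \<subseteq> X \<Longrightarrow> \<exists>U\<in>W. F \<subseteq> U" using Wfin by blast
  qed
  then obtain \<V> where VW: "\<V> \<subseteq> W" and VT: "\<V> \<in> Tstar_covers TX"
    using assms(2) unfolding select_binom_def TX_def by blast
  from VT have tau: "tau_star_cover TX \<V>" unfolding Tstar_covers_def by simp
  from tau obtain a e where bij: "bij_betw e a \<V>"
    and hinf0: "\<forall>x\<in>topspace TX. infinite (hU a e x)"
    and lr0: "linearly_refinable (hU a e ` topspace TX)"
    unfolding tau_star_cover_def by blast
  from lr0 have lr: "linearly_refinable (hU a e ` X)" by (simp only: topX)
  from lr obtain r where r0: "\<forall>y\<in>hU a e ` X. r y \<subseteq> y \<and> infinite (r y)"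
    and rch0: "\<forall>y\<in>hU a e ` X. \<forall>z\<in>hU a e ` X. almost_subset (r y) (r z) \<or> almost_subset (r z) (r y)"
    unfolding linearly_refinable_def by blast
  have r: "\<And>y. y \<in> hU a e ` X \<Longrightarrow> r y \<subseteq> y \<and> infinite (r y)" by (rule r0[rule_format])
  have rch: "\<And>y z. y \<in> hU a e ` X \<Longrightarrow> z \<in> hU a e ` X \<Longrightarrow> almost_subset (r y) (r z) \<or> almost_subset (r z) (r y)"
    by (rule rch0[rule_format])
  define h where "h x = r (hU a e x)" for x
  have hsub: "n \<in> a \<and> x \<in> e n" if "x \<in> X" "n \<in> h x" for x n
  proof -
    have "h x \<subseteq> hU a e x" unfolding h_def using r that(1) by simp
    then show ?thesis using that(2) unfolding hU_def by auto
  qed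
  have hinf2: "\<And>x. x \<in> X \<Longrightarrow> infinite (h x)" using r unfolding h_def by simp
  have hch: "\<And>x y. x \<in> X \<Longrightarrow> y \<in> X \<Longrightarrow> almost_subset (h x) (h y) \<or> almost_subset (h y) (h x)"
    unfolding h_def by (rule rch) simp_all
  have chainX: "\<exists>m\<in>h ` Z. infinite m \<and> finite (m - \<Inter>(h ` Z))" if "finite Z" "Z \<noteq> {}" "Z \<subseteq> X" for Z
  proof -
    have c3: "\<forall>y\<in>h ` Z. \<forall>z\<in>h ` Z. almost_subset y z \<or> almost_subset z y"
    proof (intro ballI)
      fix y z assume "y \<in> h ` Z" "z \<in> h ` Z"
      then obtain x1 x2 where "x1 \<in> Z" "x2 \<in> Z" "y = h x1" "z = h x2" by auto
      then show "almost_subset y z \<or> almost_subset z y" using hch that(3) by auto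
    qed
    have c1: "finite (h ` Z)" "h ` Z \<noteq> {}" using that by auto
    obtain m where m: "m \<in> h ` Z" "finite (m - \<Inter>(h ` Z))"
      using chain_min[OF c1 c3] by blast
    then obtain x where "x \<in> Z" "m = h x" by auto
    then have "infinite m" using hinf2 that(3) by auto
    then show ?thesis using m by blast
  qed
  have interinf: "infinite (\<Inter>(h ` Z))" if Z: "finite Z" "Z \<noteq> {}" "Z \<subseteq> X" for Z
  proof
    assume fin: "finite (\<Inter>(h ` Z))"
    obtain m where "infinite m" "finite (m - \<Inter>(h ` Z))" using chainX[OF Z] by blast
    moreover have "m \<subseteq> (m - \<Inter>(h ` Z)) \<union> \<Inter>(h ` Z)" by auto
    ultimately show False using fin finite_subset by blast
  qed
  have eW: "e n \<in> W" if "n \<in> a" for n using bij_betw_apply[OF bij that] VW by blast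
  have "\<forall>V\<in>W. \<exists>U. U \<in> \<U> \<and> PiE {..<k} (\<lambda>_. V) \<subseteq> U" unfolding W_def by blast
  then obtain c where c0: "\<forall>V\<in>W. c V \<in> \<U> \<and> PiE {..<k} (\<lambda>_. V) \<subseteq> c V" by (rule bchoice[elim_format]) blast
  have c: "\<And>V. V \<in> W \<Longrightarrow> c V \<in> \<U> \<and> PiE {..<k} (\<lambda>_. V) \<subseteq> c V" using c0 by simp
  define g where "g n = c (e n)" for n
  have gU: "\<And>n. n \<in> a \<Longrightarrow> g n \<in> \<U>" and gsub: "\<And>n. n \<in> a \<Longrightarrow> PiE {..<k} (\<lambda>_. e n) \<subseteq> g n"
    unfolding g_def using c eW by auto
  define \<phi> where "\<phi> n = (LEAST m. m \<in> a \<and> g m = g n)" for n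
  have phi: "\<And>n. n \<in> a \<Longrightarrow> \<phi> n \<in> a \<and> g (\<phi> n) = g n"
    unfolding \<phi>_def by (rule LeastI) simp
  define b where "b = \<phi> ` a"
  have phieq: "\<And>n m. g n = g m \<Longrightarrow> \<phi> n = \<phi> m" unfolding \<phi>_def by simp
  have bijb: "bij_betw g b (g ` a)"
    unfolding bij_betw_def
  proof
    show "inj_on g b" unfolding inj_on_def
    proof (intro ballI impI)
      fix x y assume "x \<in> b" "y \<in> b" "g x = g y"
      then obtain n m where nm: "n \<in> a" "m \<in> a" "x = \<phi> n" "y = \<phi> m" unfolding b_def by blast
      then have "g n = g m" using phi \<open>g x = g y\<close> by metis
      then show "x = y" using nm phieq by metis
    qed
    show "g ` b = g ` a"
    proof
      show "g ` b \<subseteq> g ` a" unfolding b_def using phi by blast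
      show "g ` a \<subseteq> g ` b"
      proof
        fix u assume "u \<in> g ` a"
        then obtain n where n: "n \<in> a" "u = g n" by blast
        then have "u = g (\<phi> n)" using phi by metis
        then show "u \<in> g ` b" unfolding b_def using n by blast
      qed
    qed
  qed
  define S where "S xs = \<Inter>(h ` (\<lambda>i. xs i) ` {..<k})" for xs :: "nat \<Rightarrow> real"
  define R where "R xs = \<phi> ` S xs" for xs
  have ptsX: "(\<lambda>i. xs i) ` {..<k} \<subseteq> X" if "xs \<in> Xk" for xs using that unfolding Xk_def by auto
  have ne: "(\<lambda>i. xs i) ` {..<k} \<noteq> {}" for xs :: "nat \<Rightarrow> real"
  proof -
    have "(0::nat) \<in> {..<k}" using assms(3) by simp
    then show ?thesis by blast
  qed
  have Smem: "n \<in> a \<and> xs \<in> g n" if "xs \<in> Xk" "n \<in> S xs" for xs n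
  proof -
    have 1: "\<And>i. i < k \<Longrightarrow> n \<in> a \<and> xs i \<in> e n"
      using that hsub ptsX unfolding S_def by blast
    then have "n \<in> a" using assms(3) by auto
    moreover have "xs \<in> PiE {..<k} (\<lambda>_. e n)" using 1 that(1) unfolding Xk_def by (auto simp: PiE_iff)
    ultimately show ?thesis using gsub by auto
  qed
  have Rsub: "R xs \<subseteq> hU b g xs" if "xs \<in> Xk" for xs
    unfolding R_def hU_def b_def using Smem[OF that] phi by fastforce
  have Rinf: "infinite (R xs)" if xs: "xs \<in> Xk" for xs
  proof
    assume finT: "finite (R xs)"
    have "\<forall>t\<in>R xs. \<exists>ys. ys \<in> Xk \<and> ys \<notin> g t"
    proof
      fix t assume "t \<in> R xs"
      then have "t \<in> a" unfolding R_def using Smem[OF xs] phi by auto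
      then show "\<exists>ys. ys \<in> Xk \<and> ys \<notin> g t" using gU Unot by blast
    qed
    then obtain yf where yf: "\<And>t. t \<in> R xs \<Longrightarrow> yf t \<in> Xk \<and> yf t \<notin> g t" by metis
    define Z where "Z = (\<lambda>i. xs i) ` {..<k} \<union> (\<lambda>(t,i). yf t i) ` (R xs \<times> {..<k})"
    have "finite Z" unfolding Z_def using finT by auto
    moreover have "Z \<noteq> {}" unfolding Z_def using ne by auto
    moreover have "Z \<subseteq> X" unfolding Z_def using ptsX[OF xs] yf unfolding Xk_def by (fastforce simp: PiE_iff)
    ultimately have "\<Inter>(h ` Z) \<noteq> {}" using interinf by (metis finite.emptyI)
    then obtain n where n: "n \<in> \<Inter>(h ` Z)" by blast
    then have nS: "n \<in> S xs" unfolding S_def Z_def by auto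
    then have na: "n \<in> a" using Smem[OF xs] by auto
    define t where "t = \<phi> n"
    have tR: "t \<in> R xs" unfolding t_def R_def using nS by auto
    have gt: "g t = g n" unfolding t_def using phi na by auto
    have "\<And>i. i < k \<Longrightarrow> yf t i \<in> e n"
    proof -
      fix i assume "i < k"
      then have "yf t i \<in> Z" unfolding Z_def using tR by force
      then have "n \<in> h (yf t i)" using n by auto
      then show "yf t i \<in> e n" using hsub \<open>Z \<subseteq> X\<close> \<open>yf t i \<in> Z\<close> by blast
    qed
    then have "yf t \<in> PiE {..<k} (\<lambda>_. e n)" using yf[OF tR] unfolding Xk_def by (auto simp: PiE_iff)
    then have "yf t \<in> g t" using gsub[OF na] gt by auto
    then show False using yf[OF tR] by auto
  qed
  have Rch: "almost_subset (R xs) (R ys) \<or> almost_subset (R ys) (R xs)" if xy: "xs \<in> Xk" "ys \<in> Xk" for xs ys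
  proof -
    have Sch: "finite (S xs - S ys) \<or> finite (S ys - S xs)"
    proof -
      obtain mx where mx: "mx \<in> h ` (\<lambda>i. xs i) ` {..<k}" "finite (mx - S xs)"
        using chainX[OF _ ne ptsX[OF xy(1)]] unfolding S_def by blast
      obtain my where my: "my \<in> h ` (\<lambda>i. ys i) ` {..<k}" "finite (my - S ys)"
        using chainX[OF _ ne ptsX[OF xy(2)]] unfolding S_def by blast
      have "S xs \<subseteq> mx" "S ys \<subseteq> my" using mx my unfolding S_def by auto
      moreover have "finite (mx - my) \<or> finite (my - mx)"
        using hch mx(1) my(1) ptsX xy unfolding almost_subset_def by blast
      moreover have "S xs - S ys \<subseteq> (mx - my) \<union> (my - S ys)" "S ys - S xs \<subseteq> (my - mx) \<union> (mx - S xs)"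
        using \<open>S xs \<subseteq> mx\<close> \<open>S ys \<subseteq> my\<close> by auto
      ultimately show ?thesis using mx(2) my(2) by (meson finite_Un finite_subset)
    qed
    have "\<And>A B. \<phi> ` A - \<phi> ` B \<subseteq> \<phi> ` (A - B)" by auto
    then show ?thesis using Sch unfolding almost_subset_def R_def by (meson finite_imageI finite_subset)
  qed
  define \<V>' where "\<V>' = g ` a"
  have V'U: "\<V>' \<subseteq> \<U>" unfolding \<V>'_def using gU by auto
  have "countable a" by simp
  then have cnt: "countable \<V>'" unfolding \<V>'_def by simp
  have cov: "is_cover P \<V>'"
    unfolding is_cover_def topP
  proof
    show "\<Union>\<V>' = Xk"
    proof
      show "\<Union>\<V>' \<subseteq> Xk" using V'U Uopen openin_subset topP by blast
      show "Xk \<subseteq> \<Union>\<V>'"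
      proof
        fix xs assume xs: "xs \<in> Xk"
        then have "R xs \<noteq> {}" using Rinf by force
        then obtain n where "n \<in> S xs" unfolding R_def by auto
        then show "xs \<in> \<Union>\<V>'" using Smem[OF xs] unfolding \<V>'_def by auto
      qed
    qed
    show "\<forall>U\<in>\<V>'. \<not> Xk \<subseteq> U" using V'U Unot by auto
  qed
  define r' where "r' y = R (SOME xs. xs \<in> Xk \<and> hU b g xs = y)" for y
  have "linearly_refinable (hU b g ` Xk)"
    unfolding linearly_refinable_def
  proof (intro exI conjI ballI)
    fix y assume "y \<in> hU b g ` Xk"
    then have "\<exists>xs. xs \<in> Xk \<and> hU b g xs = y" by auto
    then have s: "(SOME xs. xs \<in> Xk \<and> hU b g xs = y) \<in> Xk \<and> hU b g (SOME xs. xs \<in> Xk \<and> hU b g xs = y) = y"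
      by (rule someI_ex)
    show "r' y \<subseteq> y" unfolding r'_def using Rsub s by metis
    show "infinite (r' y)" unfolding r'_def using Rinf s by metis
  next
    fix y z assume "y \<in> hU b g ` Xk" "z \<in> hU b g ` Xk"
    then have "\<exists>xs. xs \<in> Xk \<and> hU b g xs = y" "\<exists>xs. xs \<in> Xk \<and> hU b g xs = z" by auto
    then have "(SOME xs. xs \<in> Xk \<and> hU b g xs = y) \<in> Xk" "(SOME xs. xs \<in> Xk \<and> hU b g xs = z) \<in> Xk"
      by (metis (mono_tags, lifting) someI_ex)+
    then show "almost_subset (r' y) (r' z) \<or> almost_subset (r' z) (r' y)"
      unfolding r'_def using Rch by blast
  qed
  moreover have "\<forall>xs\<in>Xk. infinite (hU b g xs)" using Rsub Rinf finite_subset by metis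
  ultimately have "tau_star_cover P \<V>'"
    unfolding tau_star_cover_def topP using cnt cov bijb \<V>'_def by blast
  then have "\<V>' \<in> Tstar_covers P"
    unfolding Tstar_covers_def using cnt V'U Uopen by auto
  then show "\<exists>\<V>. \<V> \<subseteq> \<U> \<and> \<V> \<in> Tstar_covers (product_topology (\<lambda>_. top_of_set X) {..<k})"
    using V'U unfolding P_def TX_def by blast
qed

end
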